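(* Let $d\ge1$, $\lambda>0$, $\delta>0$, and let $f:\mathbb{R}^d\to\mathbb{R}$ satisfy: (A1) $f$ is continuous and has at least one minimizer; (A2) $\int_{\mathbb{R}^d}\exp(-f(y)/\delta)\,dy<+\infty$. Then: (i) If $f\in C^1$ and there exist $m>0$, $b\ge0$ with $\langle\nabla f(y),y\rangle\ge m\|y\|^2-b$ for all $y\in\mathbb{R}^d$, then for any $R>0$, $f^{\lambda,\delta}$ is convex on the ball $B(0,R)$ provided \[\lambda\ge\frac{\delta d+b+\sqrt{(\delta d+b)^2+2\delta mR^2}}{2\delta m}.\] (ii) If $f(y)=\frac{\kappa}{2}\|y\|^2+V(y)$ for some $\kappa>0$, where $V$ is bounded with $\operatorname{osc}(V):=\sup V-\inf V<\infty$, then $f^{\lambda,\delta}$ is convex on $\mathbb{R}^d$ provided \[\lambda\ge\frac{e^{\operatorname{osc}(V)/\delta}-1}{\kappa}.\]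
   Context: The soft Moreau envelope is $f^{\lambda,\delta}(x)=-\delta\log\mathbb{E}_{y\sim\mathcal N(x,\lambda\delta I)}[\exp(-f(y)/\delta)]$, where $\mathcal N(x,\lambda\delta I)$ is the Gaussian with mean $x$ and covariance $\lambda\delta I$. *)

theory Defs
  imports "HOL-Analysis.Analysis"
begin

definition gauss_pdf :: "real \<Rightarrow> 'a::euclidean_space \<Rightarrow> 'a \<Rightarrow> real" where
  "gauss_pdf s x y = (2 * pi * s) powr (- real DIM('a) / 2) * exp (- (norm (y - x))\<^sup>2 / (2 * s))"

text \<open>Soft Moreau envelope
  f^{lam,delta}(x) = - delta * log E_{y ~ N(x, lam*delta I)} [exp(- f y / delta)].\<close>
definition soft_moreau :: "('a::euclidean_space \<Rightarrow> real) \<Rightarrow> real \<Rightarrow> real \<Rightarrow> 'a \<Rightarrow> real" where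
  "soft_moreau f lam \<delta> x =
     - \<delta> * ln (\<integral>y. gauss_pdf (lam * \<delta>) x y * exp (- f y / \<delta>) \<partial>lborel)"

end

theory Submission
  imports Defs
begin

lemma leibniz_real:
  fixes F F' :: "real \<Rightarrow> 'a \<Rightarrow> real" and w :: "'a \<Rightarrow> real"
  assumes D: "\<And>t y. ((\<lambda>t. F t y) has_real_derivative F' t y) (at t)"
    and mF: "\<And>t. F t \<in> borel_measurable M" and mF': "\<And>t. F' t \<in> borel_measurable M"
    and iF: "\<And>t. integrable M (F t)" and w: "integrable M w"
    and bd: "\<And>t y. \<bar>F' t y\<bar> \<le> w y"
  shows "((\<lambda>t. \<integral>y. F t y \<partial>M) has_real_derivative (\<integral>y. F' t y \<partial>M)) (at t)"
  unfolding has_field_derivative_iff tendsto_at_iff_sequentially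
proof (intro allI impI)
  fix X :: "nat \<Rightarrow> real" assume X: "\<forall>i. X i \<in> UNIV - {t}" "X \<longlonglongrightarrow> t"
  define s where "s i y = (F (X i) y - F t y) / (X i - t)" for i y
  have eq: "((\<lambda>u. ((\<integral>y. F u y \<partial>M) - (\<integral>y. F t y \<partial>M)) / (u - t)) \<circ> X) i = (\<integral>y. s i y \<partial>M)" for i
    unfolding s_def comp_def using iF by (simp add: integral_diff)
  have bnd: "norm (s i y) \<le> w y" for i y
  proof -
    have ne: "X i \<noteq> t" using X(1) by auto
    have "\<exists>z. min t (X i) < z \<and> z < max t (X i) \<and> F (max t (X i)) y - F (min t (X i)) y = (max t (X i) - min t (X i)) * F' z y"
      by (rule MVT2) (use ne D in auto)
    then obtain z where "F (max t (X i)) y - F (min t (X i)) y = (max t (X i) - min t (X i)) * F' z y" by blast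
    then have "s i y = F' z y" using ne unfolding s_def
      by (cases "t < X i") (auto simp: field_simps min_def max_def)
    then show ?thesis using bd[where t=z and y=y] by simp
  qed
  have lim: "(\<lambda>i. s i y) \<longlonglongrightarrow> F' t y" for y
  proof -
    have "((\<lambda>u. (F u y - F t y) / (u - t)) \<longlongrightarrow> F' t y) (at t)"
      using D[where t=t and y=y] unfolding has_field_derivative_iff by simp
    then show ?thesis unfolding tendsto_at_iff_sequentially s_def comp_def using X by auto
  qed
  have ms: "s i \<in> borel_measurable M" for i
    unfolding s_def by (intro borel_measurable_divide borel_measurable_diff mF borel_measurable_const)
  show "((\<lambda>u. ((\<integral>y. F u y \<partial>M) - (\<integral>y. F t y \<partial>M)) / (u - t)) \<circ> X) \<longlonglongrightarrow> (\<integral>y. F' t y \<partial>M)"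
    unfolding eq
    by (rule integral_dominated_convergence[where w=w]) (use ms mF' w bnd lim in auto)
qed

definition ge :: "real \<Rightarrow> 'a::euclidean_space \<Rightarrow> 'a \<Rightarrow> real" where
  "ge s x y = exp (- (norm (y - x))\<^sup>2 / (2 * s))"

lemma ge_pos: "ge s x y > 0" by (simp add: ge_def)

lemma ge_le1: "s > 0 \<Longrightarrow> ge s x y \<le> 1" by (simp add: ge_def)

lemma qexp_le: "0 \<le> q \<Longrightarrow> q * exp (- q) \<le> (1::real)"
proof -
  assume "0 \<le> q"
  have "1 + q \<le> exp q" by (rule exp_ge_add_one_self)
  then have "q \<le> exp q" by linarith
  then show ?thesis by (simp add: exp_minus field_simps)
qed

lemma norm_sq_expand: "(norm (y - (x + t *\<^sub>R v)))\<^sup>2 = (norm (y - x))\<^sup>2 - 2 * t * ((y - x) \<bullet> v) + t\<^sup>2 * (norm v)\<^sup>2"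
  for x y v :: "'a::real_inner"
proof -
  have "y - (x + t *\<^sub>R v) = (y - x) - t *\<^sub>R v" by (simp add: algebra_simps)
  then show ?thesis
    unfolding power2_norm_eq_inner by (simp add: inner_diff_left inner_diff_right inner_commute power2_eq_square algebra_simps)
qed

lemma zv_expand: "(y - (x + t *\<^sub>R v)) \<bullet> v = (y - x) \<bullet> v - t * (norm v)\<^sup>2"
  for x y v :: "'a::real_inner"
  by (simp add: inner_diff_left inner_add_left power2_norm_eq_inner)

lemma exp_quad_deriv:
  fixes a b c s t :: real assumes "s > 0"
  shows "((\<lambda>t. exp (- (c - 2 * t * a + t\<^sup>2 * b) / (2 * s))) has_real_derivative
     ((a - t * b) / s * exp (- (c - 2 * t * a + t\<^sup>2 * b) / (2 * s)))) (at t)"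
proof -
  have "((\<lambda>t. - (c - 2 * t * a + t\<^sup>2 * b) / (2 * s)) has_real_derivative ((a - t * b) / s)) (at t)"
    apply (rule derivative_eq_intros refl)+
    using assms apply (simp add: divide_simps)
    apply (simp add: algebra_simps)
    using assms apply (simp add: field_simps)
    done
  from DERIV_exp[THEN DERIV_chain2, OF this] show ?thesis by (simp add: mult.commute)
qed

lemma ge_deriv:
  assumes "s > 0"
  shows "((\<lambda>t. ge s (x + t *\<^sub>R v) y) has_real_derivative
          ((y - (x + t *\<^sub>R v)) \<bullet> v / s * ge s (x + t *\<^sub>R v) y)) (at t)"
proof -
  have e: "ge s (x + t *\<^sub>R v) y = exp (- ((norm (y - x))\<^sup>2 - 2 * t * ((y - x) \<bullet> v) + t\<^sup>2 * (norm v)\<^sup>2) / (2 * s))" for t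
    unfolding ge_def norm_sq_expand ..
  show ?thesis unfolding e zv_expand by (rule exp_quad_deriv[OF assms])
qed

lemma alg2: "s > 0 \<Longrightarrow> (- n / s) * g + a / s * g * (a / s) = ((a)\<^sup>2 / s\<^sup>2 - n / s) * (g::real)"
  by (simp add: field_simps power2_eq_square)

lemma ge_deriv2:
  assumes "s > 0"
  shows "((\<lambda>t. (y - (x + t *\<^sub>R v)) \<bullet> v / s * ge s (x + t *\<^sub>R v) y) has_real_derivative
          (((y - (x + t *\<^sub>R v)) \<bullet> v)\<^sup>2 / s\<^sup>2 - (norm v)\<^sup>2 / s) * ge s (x + t *\<^sub>R v) y) (at t)"
proof -
  have d1: "((\<lambda>t. (y - (x + t *\<^sub>R v)) \<bullet> v / s) has_real_derivative (- (norm v)\<^sup>2 / s)) (at t)"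
  proof -
    have e: "(y - (x + t *\<^sub>R v)) \<bullet> v / s = (y - x) \<bullet> v / s - t * ((norm v)\<^sup>2 / s)" for t
      unfolding zv_expand by (simp add: diff_divide_distrib)
    show ?thesis unfolding e
      by (rule derivative_eq_intros refl)+ simp
  qed
  show ?thesis
    apply (rule DERIV_cong[OF DERIV_mult[OF d1 ge_deriv[OF assms, where x=x and v=v and t=t and y=y]]])
    by (rule alg2[OF assms])
qed

lemma le_1_sq: "(r::real) \<le> 1 + r\<^sup>2"
proof -
  have "0 \<le> (r - 1)\<^sup>2" by simp
  then have "0 \<le> r * r - 2 * r + 1" by (simp add: power2_eq_square algebra_simps)
  then show ?thesis using zero_le_square[of r] unfolding power2_eq_square by linarith
qed

lemma ge_bound1:
  assumes "s > 0"
  shows "\<bar>(y - p) \<bullet> v / s * ge s p y\<bar> \<le> norm v / s * (1 + 2 * s)"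
proof -
  define q where "q = (norm (y - p))\<^sup>2 / (2 * s)"
  have q0: "q \<ge> 0" using assms by (simp add: q_def)
  have g: "ge s p y = exp (- q)" by (simp add: ge_def q_def)
  have "\<bar>(y - p) \<bullet> v\<bar> \<le> norm (y - p) * norm v" by (rule Cauchy_Schwarz_ineq2)
  also have "norm (y - p) \<le> 1 + 2 * s * q"
    using assms le_1_sq[of "norm (y - p)"] by (simp add: q_def)
  finally have A: "\<bar>(y - p) \<bullet> v\<bar> \<le> (1 + 2 * s * q) * norm v" by (simp add: mult_right_mono)
  have B: "(1 + 2 * s * q) * exp (- q) \<le> 1 + 2 * s"
  proof -
    have "exp (-q) \<le> 1" using q0 by simp
    moreover have "q * exp (-q) \<le> 1" using qexp_le[OF q0] .
    moreover have "2 * s * (q * exp (-q)) \<le> 2 * s * 1"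
      using assms \<open>q * exp (-q) \<le> 1\<close> by (intro mult_left_mono) auto
    moreover have "(1 + 2 * s * q) * exp (- q) = exp (-q) + 2 * s * (q * exp (-q))"
      by (simp add: algebra_simps)
    ultimately show ?thesis by linarith
  qed
  have "\<bar>(y - p) \<bullet> v / s * ge s p y\<bar> = \<bar>(y - p) \<bullet> v\<bar> * exp (- q) / s"
    using assms by (simp add: g abs_mult)
  also have "\<dots> \<le> (1 + 2 * s * q) * norm v * exp (- q) / s"
    using A assms by (simp add: divide_right_mono mult_right_mono)
  also have "\<dots> = norm v / s * ((1 + 2 * s * q) * exp (- q))" by simp
  also have "\<dots> \<le> norm v / s * (1 + 2 * s)"
    using B assms by (intro mult_left_mono) auto
  finally show ?thesis .
qed

lemma ge_bound2:
  assumes "s > 0"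
  shows "\<bar>(((y - p) \<bullet> v)\<^sup>2 / s\<^sup>2 - (norm v)\<^sup>2 / s) * ge s p y\<bar> \<le> 3 * (norm v)\<^sup>2 / s"
proof -
  define q where "q = (norm (y - p))\<^sup>2 / (2 * s)"
  have q0: "q \<ge> 0" using assms by (simp add: q_def)
  have g: "ge s p y = exp (- q)" by (simp add: ge_def q_def)
  have "\<bar>(y - p) \<bullet> v\<bar> \<le> norm (y - p) * norm v" by (rule Cauchy_Schwarz_ineq2)
  then have "((y - p) \<bullet> v)\<^sup>2 \<le> (norm (y - p) * norm v)\<^sup>2"
    by (metis abs_ge_zero power2_abs power_mono)
  also have "\<dots> = 2 * s * q * (norm v)\<^sup>2" using assms by (simp add: q_def power_mult_distrib)
  finally have A: "((y - p) \<bullet> v)\<^sup>2 \<le> 2 * s * q * (norm v)\<^sup>2" .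
  have "\<bar>((y - p) \<bullet> v)\<^sup>2 / s\<^sup>2 - (norm v)\<^sup>2 / s\<bar> \<le> ((y - p) \<bullet> v)\<^sup>2 / s\<^sup>2 + (norm v)\<^sup>2 / s"
    using assms by (simp add: abs_le_iff)
  also have "\<dots> \<le> (2 * q + 1) * (norm v)\<^sup>2 / s"
    using A assms by (simp add: field_simps power2_eq_square)
  finally have C: "\<bar>((y - p) \<bullet> v)\<^sup>2 / s\<^sup>2 - (norm v)\<^sup>2 / s\<bar> \<le> (2 * q + 1) * (norm v)\<^sup>2 / s" .
  have B: "(2 * q + 1) * exp (- q) \<le> 3"
  proof -
    have "exp (-q) \<le> 1" using q0 by simp
    moreover have "(2 * q + 1) * exp (- q) = 2 * (q * exp (-q)) + exp (-q)" by (simp add: algebra_simps)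
    ultimately show ?thesis using qexp_le[OF q0] by linarith
  qed
  have "\<bar>(((y - p) \<bullet> v)\<^sup>2 / s\<^sup>2 - (norm v)\<^sup>2 / s) * ge s p y\<bar>
      = \<bar>((y - p) \<bullet> v)\<^sup>2 / s\<^sup>2 - (norm v)\<^sup>2 / s\<bar> * exp (- q)" by (simp add: g abs_mult)
  also have "\<dots> \<le> (2 * q + 1) * (norm v)\<^sup>2 / s * exp (-q)"
    using C by (intro mult_right_mono) auto
  also have "\<dots> = ((2 * q + 1) * exp (- q)) * ((norm v)\<^sup>2 / s)" by simp
  also have "\<dots> \<le> 3 * ((norm v)\<^sup>2 / s)"
    using B assms by (intro mult_right_mono) (auto intro: divide_nonneg_pos)
  finally show ?thesis by simp
qed

lemma convex_on_by_lines:
  fixes \<Phi> :: "'a::real_normed_vector \<Rightarrow> real"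
  assumes S: "convex S"
    and d1: "\<And>x v t. ((\<lambda>t. \<Phi> (x + t *\<^sub>R v)) has_real_derivative \<Phi>a (x + t *\<^sub>R v) v) (at t)"
    and d2: "\<And>x v t. ((\<lambda>t. \<Phi>a (x + t *\<^sub>R v) v) has_real_derivative \<Phi>b (x + t *\<^sub>R v) v) (at t)"
    and pos: "\<And>p v. p \<in> S \<Longrightarrow> \<Phi>b p v \<ge> 0"
  shows "convex_on S \<Phi>"
proof (rule convex_onI[OF _ S])
  fix t :: real and x y assume t: "0 < t" "t < 1" and xy: "x \<in> S" "y \<in> S"
  define g where "g u = \<Phi> (x + u *\<^sub>R (y - x))" for u
  have mem: "x + u *\<^sub>R (y - x) \<in> S" if "0 \<le> u" "u \<le> 1" for u
  proof -
    have "x + u *\<^sub>R (y - x) = (1 - u) *\<^sub>R x + u *\<^sub>R y" by (simp add: algebra_simps)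
    then show ?thesis using convexD[OF S xy, of "1 - u" u] that by simp
  qed
  have cg: "convex_on {0..1} g"
  proof (rule convex_on_realI[where f' = "\<lambda>u. \<Phi>a (x + u *\<^sub>R (y - x)) (y - x)"])
    show "connected {0..1::real}" by simp
    show "(g has_real_derivative \<Phi>a (x + u *\<^sub>R (y - x)) (y - x)) (at u)" for u
      unfolding g_def by (rule d1)
    show "\<Phi>a (x + a *\<^sub>R (y - x)) (y - x) \<le> \<Phi>a (x + b *\<^sub>R (y - x)) (y - x)"
      if "a \<in> {0..1}" "b \<in> {0..1}" "a \<le> b" for a b
    proof (rule DERIV_nonneg_imp_increasing_open[OF \<open>a \<le> b\<close>])
      show "\<exists>D. ((\<lambda>u. \<Phi>a (x + u *\<^sub>R (y - x)) (y - x)) has_real_derivative D) (at u) \<and> D \<ge> 0"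
        if "a < u" "u < b" for u
        using d2[of x "y - x" u] pos[OF mem, of u "y - x"] that \<open>a \<in> {0..1}\<close> \<open>b \<in> {0..1}\<close> by auto
      show "continuous_on {a..b} (\<lambda>u. \<Phi>a (x + u *\<^sub>R (y - x)) (y - x))"
        using d2 by (intro continuous_at_imp_continuous_on ballI DERIV_isCont) blast
    qed
  qed
  have "g ((1 - t) *\<^sub>R 0 + t *\<^sub>R 1) \<le> (1 - t) * g 0 + t * g 1"
    using convex_onD[OF cg, where t=t and x=0 and y=1] t by simp
  moreover have "x + t *\<^sub>R (y - x) = (1 - t) *\<^sub>R x + t *\<^sub>R y" by (simp add: algebra_simps)
  ultimately show "\<Phi> ((1 - t) *\<^sub>R x + t *\<^sub>R y) \<le> (1 - t) * \<Phi> x + t * \<Phi> y"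
    unfolding g_def by simp
qed

definition Zf :: "('a::euclidean_space \<Rightarrow> real) \<Rightarrow> real \<Rightarrow> 'a \<Rightarrow> real" where
  "Zf h s p = (\<integral>y. h y * ge s p y \<partial>lborel)"
definition Z1 :: "('a::euclidean_space \<Rightarrow> real) \<Rightarrow> real \<Rightarrow> 'a \<Rightarrow> 'a \<Rightarrow> real" where
  "Z1 h s p v = (\<integral>y. h y * ((y - p) \<bullet> v / s * ge s p y) \<partial>lborel)"
definition Z2 :: "('a::euclidean_space \<Rightarrow> real) \<Rightarrow> real \<Rightarrow> 'a \<Rightarrow> 'a \<Rightarrow> real" where
  "Z2 h s p v = (\<integral>y. h y * ((((y - p) \<bullet> v)\<^sup>2 / s\<^sup>2 - (norm v)\<^sup>2 / s) * ge s p y) \<partial>lborel)"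

lemma ge_measurable[measurable]: "ge s p \<in> borel_measurable borel"
  unfolding ge_def by measurable

lemma absmul_le: "0 \<le> (a::real) \<Longrightarrow> \<bar>b\<bar> \<le> c \<Longrightarrow> \<bar>a * b\<bar> \<le> a * c"
  by (simp add: abs_mult mult_left_mono)

lemma norm_le_of: "\<bar>X\<bar> \<le> Y \<Longrightarrow> norm (X::real) \<le> norm (Y::real)"
  by auto

context
  fixes h :: "'a::euclidean_space \<Rightarrow> real" and s :: real
  assumes hint: "integrable lborel h" and hnn: "\<And>y. 0 \<le> h y" and s: "s > 0"
begin

lemma hmeas[measurable]: "h \<in> borel_measurable borel"
  using borel_measurable_integrable[OF hint] by simp

lemma Zf_deriv: "((\<lambda>t. Zf h s (x + t *\<^sub>R v)) has_real_derivative Z1 h s (x + t *\<^sub>R v) v) (at t)"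
  unfolding Zf_def Z1_def
proof (rule leibniz_real[where w = "\<lambda>y. h y * (norm v / s * (1 + 2 * s))"])
  show "((\<lambda>t. h y * ge s (x + t *\<^sub>R v) y) has_real_derivative
          h y * ((y - (x + t *\<^sub>R v)) \<bullet> v / s * ge s (x + t *\<^sub>R v) y)) (at t)" for t y
    by (rule DERIV_cmult[OF ge_deriv[OF s]])
  show "(\<lambda>y. h y * ge s (x + t *\<^sub>R v) y) \<in> borel_measurable lborel" for t by measurable
  show "(\<lambda>y. h y * ((y - (x + t *\<^sub>R v)) \<bullet> v / s * ge s (x + t *\<^sub>R v) y)) \<in> borel_measurable lborel" for t
    by measurable
  show "integrable lborel (\<lambda>y. h y * ge s (x + t *\<^sub>R v) y)" for t
  proof (rule Bochner_Integration.integrable_bound[OF hint])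
    show "AE y in lborel. norm (h y * ge s (x + t *\<^sub>R v) y) \<le> norm (h y)"
    proof (intro AE_I2)
      fix y
      have "h y * ge s (x + t *\<^sub>R v) y \<le> h y" using hnn[of y] ge_le1[OF s] by (intro mult_left_le) auto
      then show "norm (h y * ge s (x + t *\<^sub>R v) y) \<le> norm (h y)"
        using hnn[of y] ge_pos[of s "x + t *\<^sub>R v" y] by simp
    qed
  qed measurable
  show "integrable lborel (\<lambda>y. h y * (norm v / s * (1 + 2 * s)))" using hint by simp
  show "\<bar>h y * ((y - (x + t *\<^sub>R v)) \<bullet> v / s * ge s (x + t *\<^sub>R v) y)\<bar> \<le> h y * (norm v / s * (1 + 2 * s))" for t y
    by (rule absmul_le[OF hnn ge_bound1[OF s]])
qed

lemma Z1_deriv: "((\<lambda>t. Z1 h s (x + t *\<^sub>R v) v) has_real_derivative Z2 h s (x + t *\<^sub>R v) v) (at t)"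
  unfolding Z2_def Z1_def
proof (rule leibniz_real[where w = "\<lambda>y. h y * (3 * (norm v)\<^sup>2 / s)"])
  show "((\<lambda>t. h y * ((y - (x + t *\<^sub>R v)) \<bullet> v / s * ge s (x + t *\<^sub>R v) y)) has_real_derivative
          h y * ((((y - (x + t *\<^sub>R v)) \<bullet> v)\<^sup>2 / s\<^sup>2 - (norm v)\<^sup>2 / s) * ge s (x + t *\<^sub>R v) y)) (at t)" for t y
    by (rule DERIV_cmult[OF ge_deriv2[OF s]])
  show "(\<lambda>y. h y * ((y - (x + t *\<^sub>R v)) \<bullet> v / s * ge s (x + t *\<^sub>R v) y)) \<in> borel_measurable lborel" for t
    by measurable
  show "(\<lambda>y. h y * ((((y - (x + t *\<^sub>R v)) \<bullet> v)\<^sup>2 / s\<^sup>2 - (norm v)\<^sup>2 / s) * ge s (x + t *\<^sub>R v) y)) \<in> borel_measurable lborel" for t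
    by measurable
  show "integrable lborel (\<lambda>y. h y * ((y - (x + t *\<^sub>R v)) \<bullet> v / s * ge s (x + t *\<^sub>R v) y))" for t
  proof (rule Bochner_Integration.integrable_bound[where f = "\<lambda>y. h y * (norm v / s * (1 + 2 * s))"])
    show "integrable lborel (\<lambda>y. h y * (norm v / s * (1 + 2 * s)))" using hint by simp
    show "AE y in lborel. norm (h y * ((y - (x + t *\<^sub>R v)) \<bullet> v / s * ge s (x + t *\<^sub>R v) y))
       \<le> norm (h y * (norm v / s * (1 + 2 * s)))"
      by (intro AE_I2 norm_le_of absmul_le[OF hnn ge_bound1[OF s]])
  qed measurable
  show "integrable lborel (\<lambda>y. h y * (3 * (norm v)\<^sup>2 / s))" using hint by simp
  show "\<bar>h y * ((((y - (x + t *\<^sub>R v)) \<bullet> v)\<^sup>2 / s\<^sup>2 - (norm v)\<^sup>2 / s) * ge s (x + t *\<^sub>R v) y)\<bar> \<le> h y * (3 * (norm v)\<^sup>2 / s)" for t y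
    by (rule absmul_le[OF hnn ge_bound2[OF s]])
qed

end

lemma ge_abs_le1: "s > 0 \<Longrightarrow> \<bar>ge s p y\<bar> \<le> 1"
  by (simp add: ge_def)

lemma ge_b1: "s > 0 \<Longrightarrow> \<bar>(y - p) \<bullet> v * ge s p y\<bar> \<le> norm v * (1 + 2 * s)"
proof -
  assume s: "s > 0"
  have "\<bar>(y - p) \<bullet> v / s * ge s p y\<bar> \<le> norm v / s * (1 + 2 * s)" by (rule ge_bound1[OF s])
  then have "\<bar>(y - p) \<bullet> v * ge s p y\<bar> / s \<le> norm v * (1 + 2 * s) / s"
    using s by (simp add: abs_mult)
  then show ?thesis using s by (simp add: divide_le_cancel)
qed

lemma ge_b2: "s > 0 \<Longrightarrow> \<bar>((y - p) \<bullet> v)\<^sup>2 * ge s p y\<bar> \<le> 2 * s * (norm v)\<^sup>2"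
proof -
  assume s: "s > 0"
  define q where "q = (norm (y - p))\<^sup>2 / (2 * s)"
  have q0: "q \<ge> 0" using s by (simp add: q_def)
  have g: "ge s p y = exp (- q)" by (simp add: ge_def q_def)
  have "\<bar>(y - p) \<bullet> v\<bar> \<le> norm (y - p) * norm v" by (rule Cauchy_Schwarz_ineq2)
  then have "((y - p) \<bullet> v)\<^sup>2 \<le> (norm (y - p) * norm v)\<^sup>2"
    by (metis abs_ge_zero power2_abs power_mono)
  also have "\<dots> = 2 * s * q * (norm v)\<^sup>2" using s by (simp add: q_def power_mult_distrib)
  finally have A: "((y - p) \<bullet> v)\<^sup>2 \<le> 2 * s * q * (norm v)\<^sup>2" .
  have "\<bar>((y - p) \<bullet> v)\<^sup>2 * ge s p y\<bar> = ((y - p) \<bullet> v)\<^sup>2 * exp (- q)" by (simp add: g)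
  also have "\<dots> \<le> 2 * s * q * (norm v)\<^sup>2 * exp (- q)" using A by (intro mult_right_mono) auto
  also have "\<dots> = 2 * s * (norm v)\<^sup>2 * (q * exp (- q))" by simp
  also have "\<dots> \<le> 2 * s * (norm v)\<^sup>2 * 1" using qexp_le[OF q0] s by (intro mult_left_mono) auto
  finally show ?thesis by simp
qed

lemma alg_B: "(h::real) * ((w - c)\<^sup>2 * g) = h * (w\<^sup>2 * g) - 2 * c * (h * (w * g)) + c\<^sup>2 * (h * g)"
  by (simp add: power2_eq_square algebra_simps)
lemma alg_Z1: "(h::real) * (w / s * g) = h * (w * g) / s" by simp
lemma alg_Z2: "(h::real) * ((w\<^sup>2 / s\<^sup>2 - n / s) * g) = h * (w\<^sup>2 * g) / s\<^sup>2 - n / s * (h * g)"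
  by (simp add: algebra_simps diff_divide_distrib)

context
  fixes h :: "'a::euclidean_space \<Rightarrow> real" and s :: real
  assumes hint: "integrable lborel h" and hpos: "\<And>y. 0 < h y" and s: "s > 0"
begin

lemma hnn: "0 \<le> h y" using hpos[of y] by simp

lemma hmeas'[measurable]: "h \<in> borel_measurable borel"
  using borel_measurable_integrable[OF hint] by simp

lemma int_hb:
  assumes [measurable]: "g \<in> borel_measurable borel" and b: "\<And>y. \<bar>g y\<bar> \<le> C"
  shows "integrable lborel (\<lambda>y. h y * g y)"
proof (rule Bochner_Integration.integrable_bound[where f = "\<lambda>y. h y * C"])
  show "integrable lborel (\<lambda>y. h y * C)" using hint by simp
  show "AE y in lborel. norm (h y * g y) \<le> norm (h y * C)"
    by (intro AE_I2 norm_le_of absmul_le[OF hnn b])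
qed measurable

lemma Zf_pos: "Zf h s p > 0"
proof -
  have i: "integrable lborel (\<lambda>y. h y * ge s p y)"
    by (rule int_hb[OF _ ge_abs_le1[OF s]]) measurable
  have nn: "0 \<le> Zf h s p" unfolding Zf_def
    by (intro integral_nonneg_AE AE_I2) (simp add: hnn ge_pos less_imp_le)
  moreover have "Zf h s p \<noteq> 0"
  proof
    assume "Zf h s p = 0"
    moreover have nnAE: "AE y in lborel. 0 \<le> h y * ge s p y"
      by (intro AE_I2) (simp add: hnn ge_pos less_imp_le)
    ultimately have "AE y in lborel. h y * ge s p y = 0"
      using integral_nonneg_eq_0_iff_AE[OF i nnAE] unfolding Zf_def by simp
    have nz: "\<And>y. h y * ge s p y \<noteq> 0" using mult_pos_pos[OF hpos ge_pos] by (metis less_irrefl)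
    have "AE (y::'a) in lborel. False"
      by (rule AE_mp[OF \<open>AE y in lborel. h y * ge s p y = 0\<close>], rule AE_I2) (use nz in blast)
    then have "ae_filter (lborel::'a measure) = bot" using trivial_limit_def by blast
    then show False by (simp add: ae_filter_eq_bot_iff)
  qed
  ultimately show ?thesis by simp
qed

lemma convex_Zf:
  assumes d: "\<delta> > 0" and S: "convex S"
    and key: "\<And>p v. p \<in> S \<Longrightarrow> Z2 h s p v * Zf h s p \<le> Z1 h s p v * Z1 h s p v"
  shows "convex_on S (\<lambda>p. - \<delta> * ln (Zf h s p))"
proof (rule convex_on_by_lines[OF S, where \<Phi>a = "\<lambda>p v. - \<delta> * (Z1 h s p v / Zf h s p)"
      and \<Phi>b = "\<lambda>p v. - \<delta> * ((Z2 h s p v * Zf h s p - Z1 h s p v * Z1 h s p v) / (Zf h s p * Zf h s p))"])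
  show "((\<lambda>t. - \<delta> * ln (Zf h s (x + t *\<^sub>R v))) has_real_derivative - \<delta> * (Z1 h s (x + t *\<^sub>R v) v / Zf h s (x + t *\<^sub>R v))) (at t)"
    for x v t
    apply (rule DERIV_cong[OF DERIV_cmult[OF DERIV_chain2[OF DERIV_ln_divide[OF Zf_pos] Zf_deriv[OF hint hnn s]]]])
    by simp
  show "((\<lambda>t. - \<delta> * (Z1 h s (x + t *\<^sub>R v) v / Zf h s (x + t *\<^sub>R v))) has_real_derivative
      - \<delta> * ((Z2 h s (x + t *\<^sub>R v) v * Zf h s (x + t *\<^sub>R v) - Z1 h s (x + t *\<^sub>R v) v * Z1 h s (x + t *\<^sub>R v) v) /
         (Zf h s (x + t *\<^sub>R v) * Zf h s (x + t *\<^sub>R v)))) (at t)" for x v t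
    by (rule DERIV_cmult[OF DERIV_divide[OF Z1_deriv[OF hint hnn s] Zf_deriv[OF hint hnn s]]])
       (use Zf_pos in \<open>simp add: less_imp_neq[symmetric]\<close>)
  show "0 \<le> - \<delta> * ((Z2 h s p v * Zf h s p - Z1 h s p v * Z1 h s p v) / (Zf h s p * Zf h s p))"
    if "p \<in> S" for p v
  proof -
    have "(Z2 h s p v * Zf h s p - Z1 h s p v * Z1 h s p v) / (Zf h s p * Zf h s p) \<le> 0"
      using key[OF that] Zf_pos[of p] by (intro divide_nonpos_pos) auto
    then have "\<delta> * ((Z2 h s p v * Zf h s p - Z1 h s p v * Z1 h s p v) / (Zf h s p * Zf h s p)) \<le> 0"
      using d by (intro mult_nonneg_nonpos) auto
    then show ?thesis by simp
  qed
qed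

lemma var_bound:
  assumes B: "(\<integral>y. h y * ((((y - p) \<bullet> v) - c)\<^sup>2 * ge s p y) \<partial>lborel) \<le> s * (norm v)\<^sup>2 * Zf h s p"
  shows "Z2 h s p v * Zf h s p \<le> Z1 h s p v * Z1 h s p v"
proof -
  define A0 where "A0 = Zf h s p"
  define A1 where "A1 = (\<integral>y. h y * ((y - p) \<bullet> v * ge s p y) \<partial>lborel)"
  define A2 where "A2 = (\<integral>y. h y * (((y - p) \<bullet> v)\<^sup>2 * ge s p y) \<partial>lborel)"
  have i0: "integrable lborel (\<lambda>y. h y * ge s p y)"
    by (rule int_hb[OF _ ge_abs_le1[OF s]]) measurable
  have i1: "integrable lborel (\<lambda>y. h y * ((y - p) \<bullet> v * ge s p y))"
    by (rule int_hb[OF _ ge_b1[OF s]]) measurable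
  have i2: "integrable lborel (\<lambda>y. h y * (((y - p) \<bullet> v)\<^sup>2 * ge s p y))"
    by (rule int_hb[OF _ ge_b2[OF s]]) measurable
  have Z1e: "Z1 h s p v = A1 / s" unfolding Z1_def A1_def alg_Z1 by simp
  have Z2e: "Z2 h s p v = A2 / s\<^sup>2 - (norm v)\<^sup>2 / s * A0" unfolding Z2_def A2_def A0_def Zf_def alg_Z2
    using i0 i2 by (simp add: integral_diff)
  have Be: "(\<integral>y. h y * ((((y - p) \<bullet> v) - c)\<^sup>2 * ge s p y) \<partial>lborel) = A2 - 2 * c * A1 + c\<^sup>2 * A0"
    unfolding alg_B A2_def A1_def A0_def Zf_def
    using i0 i1 i2 by (simp add: integral_diff integral_add)
  have A0p: "A0 > 0" unfolding A0_def by (rule Zf_pos)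
  have core: "A2 * A0 - A1 * A1 \<le> s * (norm v)\<^sup>2 * A0 * A0"
  proof -
    have "A0 * (A2 - 2 * c * A1 + c\<^sup>2 * A0) \<le> A0 * (s * (norm v)\<^sup>2 * A0)"
      using B A0p unfolding Be A0_def by (intro mult_left_mono) auto
    moreover have "A0 * (A2 - 2 * c * A1 + c\<^sup>2 * A0) = (A2 * A0 - A1 * A1) + (A1 - c * A0)\<^sup>2"
      by (simp add: power2_eq_square algebra_simps)
    moreover have "0 \<le> (A1 - c * A0)\<^sup>2" by simp
    moreover have "A0 * (s * (norm v)\<^sup>2 * A0) = s * (norm v)\<^sup>2 * A0 * A0" by simp
    ultimately show ?thesis by linarith
  qed
  have "Z2 h s p v * Zf h s p - Z1 h s p v * Z1 h s p v = (A2 * A0 - A1 * A1 - s * (norm v)\<^sup>2 * A0 * A0) / s\<^sup>2"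
    unfolding Z1e Z2e A0_def[symmetric] using s by (simp add: field_simps power2_eq_square)
  also have "\<dots> \<le> 0" using core s by (intro divide_nonpos_pos) auto
  finally show ?thesis by simp
qed

end

lemma ray_deriv:
  fixes f :: "'a::euclidean_space \<Rightarrow> real"
  assumes deriv: "\<And>y. (f has_derivative (\<lambda>h. g y \<bullet> h)) (at y)"
  shows "((\<lambda>\<rho>. f (\<rho> *\<^sub>R y)) has_real_derivative (g (\<rho> *\<^sub>R y) \<bullet> y)) (at \<rho>)"
proof -
  have l: "((\<lambda>\<rho>. \<rho> *\<^sub>R y) has_derivative (\<lambda>h. h *\<^sub>R y)) (at \<rho>)"
    by (intro derivative_eq_intros) auto
  have "((\<lambda>\<rho>. f (\<rho> *\<^sub>R y)) has_derivative (\<lambda>h. g (\<rho> *\<^sub>R y) \<bullet> (h *\<^sub>R y))) (at \<rho>)"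
    using has_derivative_compose[OF l deriv] by (simp add: o_def)
  moreover have "(\<lambda>h. g (\<rho> *\<^sub>R y) \<bullet> (h *\<^sub>R y)) = (\<lambda>h. (g (\<rho> *\<^sub>R y) \<bullet> y) * h)"
    by (rule ext) (simp add: mult.commute)
  ultimately show ?thesis unfolding has_field_derivative_def by simp
qed

lemma ray_mvt:
  fixes f :: "'a::euclidean_space \<Rightarrow> real"
  assumes deriv: "\<And>y. (f has_derivative (\<lambda>h. g y \<bullet> h)) (at y)"
    and coerc: "\<And>y. g y \<bullet> y \<ge> m * (norm y)\<^sup>2 - b"
    and m: "m > 0" and b: "b \<ge> 0" and r: "0 < r" "r < 1"
  shows "f y - f (r *\<^sub>R y) \<ge> (1 - r) * (m * r * (norm y)\<^sup>2 - b / r)"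
proof -
  obtain \<xi> where \<xi>: "r < \<xi>" "\<xi> < 1" and eq: "f (1 *\<^sub>R y) - f (r *\<^sub>R y) = (1 - r) * (g (\<xi> *\<^sub>R y) \<bullet> y)"
    using MVT2[of r 1 "\<lambda>\<rho>. f (\<rho> *\<^sub>R y)" "\<lambda>\<rho>. g (\<rho> *\<^sub>R y) \<bullet> y"] r ray_deriv[OF deriv] by blast
  have "\<xi> * (g (\<xi> *\<^sub>R y) \<bullet> y) = g (\<xi> *\<^sub>R y) \<bullet> (\<xi> *\<^sub>R y)" by simp
  also have "\<dots> \<ge> m * (norm (\<xi> *\<^sub>R y))\<^sup>2 - b" by (rule coerc)
  finally have "\<xi> * (g (\<xi> *\<^sub>R y) \<bullet> y) \<ge> m * \<xi>\<^sup>2 * (norm y)\<^sup>2 - b"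
    using \<xi> r by (simp add: power_mult_distrib)
  then have "g (\<xi> *\<^sub>R y) \<bullet> y \<ge> m * \<xi> * (norm y)\<^sup>2 - b / \<xi>"
    using \<xi> r by (simp add: field_simps power2_eq_square)
  moreover have "m * \<xi> * (norm y)\<^sup>2 \<ge> m * r * (norm y)\<^sup>2"
    using \<xi> m by (intro mult_right_mono) auto
  moreover have "b / \<xi> \<le> b / r" using \<xi> r b by (intro divide_left_mono) auto
  ultimately have "g (\<xi> *\<^sub>R y) \<bullet> y \<ge> m * r * (norm y)\<^sup>2 - b / r" by linarith
  then have "(1 - r) * (g (\<xi> *\<^sub>R y) \<bullet> y) \<ge> (1 - r) * (m * r * (norm y)\<^sup>2 - b / r)"
    using r by (intro mult_left_mono) auto
  then show ?thesis using eq by simp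
qed

lemma quad_diff: "(norm (y - p))\<^sup>2 - (norm (r *\<^sub>R y - p))\<^sup>2 = (1 - r\<^sup>2) * (norm y)\<^sup>2 - 2 * (1 - r) * (y \<bullet> p)"
  for y p :: "'a::real_inner"
  unfolding power2_norm_eq_inner
  by (simp add: inner_diff_left inner_diff_right inner_commute power2_eq_square algebra_simps)

lemma ge_sq_bound:
  assumes s: "s > 0"
  shows "\<bar>(norm y)\<^sup>2 * ge s p y\<bar> \<le> 4 * s + 2 * (norm p)\<^sup>2"
proof -
  define q where "q = (norm (y - p))\<^sup>2 / (2 * s)"
  have q0: "q \<ge> 0" using s by (simp add: q_def)
  have g: "ge s p y = exp (- q)" by (simp add: ge_def q_def)
  have "norm y \<le> norm (y - p) + norm p" using norm_triangle_ineq[of "y - p" p] by simp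
  then have "(norm y)\<^sup>2 \<le> (norm (y - p) + norm p)\<^sup>2" by (simp add: power_mono)
  also have "\<dots> \<le> 2 * (norm (y - p))\<^sup>2 + 2 * (norm p)\<^sup>2"
    using sum_squares_ge_zero[of "norm (y - p) - norm p" 0] by (simp add: power2_eq_square algebra_simps)
  also have "\<dots> = 4 * s * q + 2 * (norm p)\<^sup>2" using s by (simp add: q_def)
  finally have A: "(norm y)\<^sup>2 \<le> 4 * s * q + 2 * (norm p)\<^sup>2" .
  have "\<bar>(norm y)\<^sup>2 * ge s p y\<bar> = (norm y)\<^sup>2 * exp (- q)" by (simp add: g)
  also have "\<dots> \<le> (4 * s * q + 2 * (norm p)\<^sup>2) * exp (- q)" using A by (intro mult_right_mono) auto
  also have "\<dots> = 4 * s * (q * exp (- q)) + 2 * (norm p)\<^sup>2 * exp (- q)" by (simp add: algebra_simps)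
  also have "\<dots> \<le> 4 * s * 1 + 2 * (norm p)\<^sup>2 * 1"
    using qexp_le[OF q0] q0 s by (intro add_mono mult_left_mono) auto
  finally show ?thesis by simp
qed

lemma inner_half: "y \<bullet> p \<le> ((norm y)\<^sup>2 + (norm p)\<^sup>2) / 2" for y p :: "'a::real_inner"
proof -
  have "0 \<le> (norm (y - p))\<^sup>2" by simp
  then show ?thesis unfolding power2_norm_eq_inner
    by (simp add: inner_diff_left inner_diff_right inner_commute algebra_simps)
qed

lemma ge_inner_bound:
  assumes s: "s > 0"
  shows "\<bar>(y \<bullet> p) * ge s p y\<bar> \<le> (4 * s + 3 * (norm p)\<^sup>2) / 2"
proof -
  have "\<bar>y \<bullet> p\<bar> \<le> ((norm y)\<^sup>2 + (norm p)\<^sup>2) / 2"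
    using inner_half[of y p] inner_half[of "-y" p] by (simp add: abs_le_iff)
  then have "\<bar>(y \<bullet> p) * ge s p y\<bar> \<le> ((norm y)\<^sup>2 + (norm p)\<^sup>2) / 2 * ge s p y"
    using ge_pos[of s p y] by (simp add: abs_mult mult_right_mono)
  also have "\<dots> = ((norm y)\<^sup>2 * ge s p y + (norm p)\<^sup>2 * ge s p y) / 2" by (simp add: algebra_simps)
  also have "\<dots> \<le> ((4 * s + 2 * (norm p)\<^sup>2) + (norm p)\<^sup>2 * 1) / 2"
    using ge_sq_bound[OF s, of y p] ge_le1[OF s, of p y] ge_pos[of s p y]
    by (intro divide_right_mono add_mono mult_left_mono) auto
  finally show ?thesis by simp
qed

lemma nn_integral_scale_euclid:
  fixes f :: "'a::euclidean_space \<Rightarrow> ennreal" and c :: real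
  assumes f[measurable]: "f \<in> borel_measurable borel" and c: "c \<noteq> 0"
  shows "(\<integral>\<^sup>+x. f x \<partial>lborel) = ennreal (\<bar>c\<bar> ^ DIM('a)) * (\<integral>\<^sup>+x. f (t + c *\<^sub>R x) \<partial>lborel)"
  by (subst lborel_affine[OF c, of t])
     (simp add: nn_integral_density nn_integral_distr nn_integral_cmult)

lemma integrable_scale_euclid:
  fixes f :: "'a::euclidean_space \<Rightarrow> real"
  assumes f: "integrable lborel f" and c: "c \<noteq> 0"
  shows "integrable lborel (\<lambda>x. f (t + c *\<^sub>R x))"
proof -
  have [measurable]: "f \<in> borel_measurable borel" using borel_measurable_integrable[OF f] by simp
  have "(\<integral>\<^sup>+x. ennreal (norm (f x)) \<partial>lborel) < \<infinity>" using f unfolding integrable_iff_bounded by simp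
  then have "ennreal (\<bar>c\<bar> ^ DIM('a)) * (\<integral>\<^sup>+x. ennreal (norm (f (t + c *\<^sub>R x))) \<partial>lborel) < \<infinity>"
    by (subst (asm) nn_integral_scale_euclid[OF _ c, of _ t]) auto
  moreover have "\<bar>c\<bar> ^ DIM('a) > 0" using c by simp
  ultimately have "(\<integral>\<^sup>+x. ennreal (norm (f (t + c *\<^sub>R x))) \<partial>lborel) = 0 \<or> (\<integral>\<^sup>+x. ennreal (norm (f (t + c *\<^sub>R x))) \<partial>lborel) < \<infinity>"
    by (simp add: ennreal_mult_less_top)
  then have "(\<integral>\<^sup>+x. ennreal (norm (f (t + c *\<^sub>R x))) \<partial>lborel) < \<infinity>"
    by (metis ennreal_zero_less_top infinity_ennreal_def)
  then show ?thesis unfolding integrable_iff_bounded by simp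
qed

lemma integral_scale_euclid:
  fixes f :: "'a::euclidean_space \<Rightarrow> real"
  assumes f: "integrable lborel f" and c: "c \<noteq> 0"
  shows "(\<integral>x. f x \<partial>lborel) = \<bar>c\<bar> ^ DIM('a) * (\<integral>x. f (t + c *\<^sub>R x) \<partial>lborel)"
proof -
  have [measurable]: "f \<in> borel_measurable borel" using borel_measurable_integrable[OF f] by simp
  show ?thesis
    by (subst lborel_affine[OF c, of t]) (simp add: integral_density integral_distr)
qed

lemma lim_pow: "((\<lambda>r::real. (1 / r ^ n - 1) / (1 - r)) \<longlongrightarrow> real n) (at_left 1)"
proof -
  have "((\<lambda>r::real. 1 / r ^ n) has_real_derivative - real n) (at 1)"
    by (auto intro!: derivative_eq_intros)
  then have "((\<lambda>r::real. (1 / r ^ n - 1 / 1 ^ n) / (r - 1)) \<longlongrightarrow> - real n) (at 1)"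
    unfolding has_field_derivative_iff .
  then have L: "((\<lambda>r::real. - ((1 / r ^ n - 1 / 1 ^ n) / (r - 1))) \<longlongrightarrow> - (- real n)) (at 1)"
    by (rule tendsto_minus)
  have "(\<lambda>r::real. - ((1 / r ^ n - 1 / 1 ^ n) / (r - 1))) = (\<lambda>r. (1 / r ^ n - 1) / (1 - r))"
    by (rule ext) (metis divide_minus_right minus_diff_eq power_one div_by_1)
  with L have "((\<lambda>r::real. (1 / r ^ n - 1) / (1 - r)) \<longlongrightarrow> real n) (at 1)" by simp
  then show ?thesis by (rule filterlim_mono) (auto simp: at_le)
qed

lemma alg_L:
  fixes E N P r m b lam \<delta> :: real
  assumes "r \<noteq> 0" "lam \<noteq> 0" "\<delta> \<noteq> 0"
  shows "E * (1 + ((1 - r) * (m * r * N - b / r) + ((1 - r\<^sup>2) * N - 2 * (1 - r) * P) / (2 * lam)) / \<delta>)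
    = E + (((1 - r) * m * r + (1 - r\<^sup>2) / (2 * lam)) / \<delta>) * (N * E) + (- ((1 - r) * b / r) / \<delta>) * E
      + (- (2 * (1 - r) / (2 * lam)) / \<delta>) * (P * E)"
  using assms by (simp add: field_simps power2_eq_square)

lemma part1_M:
  fixes f :: "'a::euclidean_space \<Rightarrow> real" and g :: "'a \<Rightarrow> 'a"
  assumes lam: "lam > 0" and d: "\<delta> > 0"
    and deriv: "\<And>y. (f has_derivative (\<lambda>h. g y \<bullet> h)) (at y)"
    and coerc: "\<And>y. g y \<bullet> y \<ge> m * (norm y)\<^sup>2 - b"
    and m: "m > 0" and b: "b \<ge> 0"
    and hint: "integrable lborel (\<lambda>y. exp (- f y / \<delta>))"
    and pR: "norm p \<le> R"
    and cond: "\<delta> * m * lam \<ge> \<delta> * real DIM('a) + b + R\<^sup>2 / (2 * lam)"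
  shows "(\<integral>y. exp (- f y / \<delta>) * ((norm y)\<^sup>2 * ge (lam * \<delta>) p y) \<partial>lborel)
           \<le> lam * \<delta> * Zf (\<lambda>y. exp (- f y / \<delta>)) (lam * \<delta>) p"
proof -
  define h where "h = (\<lambda>y. exp (- f y / \<delta>))"
  define s where "s = lam * \<delta>"
  have s: "s > 0" using lam d by (simp add: s_def)
  have hint': "integrable lborel h" using hint by (simp add: h_def)
  have hpos: "\<And>y. 0 < h y" by (simp add: h_def)
  have [measurable]: "h \<in> borel_measurable borel" using hmeas'[OF hint' hpos s] .
  define e where "e y = h y * ge s p y" for y
  have [measurable]: "e \<in> borel_measurable borel" unfolding e_def by measurable
  have ie: "integrable lborel e" unfolding e_def
    by (rule int_hb[OF hint' hpos s _ ge_abs_le1[OF s]]) measurable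
  have iN: "integrable lborel (\<lambda>y. (norm y)\<^sup>2 * e y)"
  proof -
    have "integrable lborel (\<lambda>y. h y * ((norm y)\<^sup>2 * ge s p y))"
      by (rule int_hb[OF hint' hpos s _ ge_sq_bound[OF s]]) measurable
    then show ?thesis by (simp add: e_def mult.left_commute)
  qed
  have iP: "integrable lborel (\<lambda>y. (y \<bullet> p) * e y)"
  proof -
    have "integrable lborel (\<lambda>y. h y * ((y \<bullet> p) * ge s p y))"
      by (rule int_hb[OF hint' hpos s _ ge_inner_bound[OF s]]) measurable
    then show ?thesis by (simp add: e_def mult.left_commute)
  qed
  define Z where "Z = (\<integral>y. e y \<partial>lborel)"
  define M where "M = (\<integral>y. (norm y)\<^sup>2 * e y \<partial>lborel)"
  define J where "J = (\<integral>y. (y \<bullet> p) * e y \<partial>lborel)"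
  have Zpos: "Z > 0" using Zf_pos[OF hint' hpos s, of p] by (simp add: Z_def Zf_def e_def)
  define U where "U y = f y + (norm (y - p))\<^sup>2 / (2 * lam)" for y
  have eU: "e y = exp (- U y / \<delta>)" for y
  proof -
    have "e y = exp (- f y / \<delta>) * exp (- (norm (y - p))\<^sup>2 / (2 * s))"
      by (simp add: e_def h_def ge_def)
    also have "\<dots> = exp (- f y / \<delta> + - (norm (y - p))\<^sup>2 / (2 * s))"
      by (rule mult_exp_exp)
    also have "- f y / \<delta> + - (norm (y - p))\<^sup>2 / (2 * s) = - U y / \<delta>"
      using lam d by (simp add: U_def s_def field_simps)
    finally show ?thesis .
  qed
  define \<Phi> where "\<Phi> r = (m * r + (1 + r) / (2 * lam)) * M - (b / r) * Z - J / lam" for r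
  have step: "\<Phi> r \<le> \<delta> * Z * ((1 / r ^ DIM('a) - 1) / (1 - r))" if r: "0 < r" "r < 1" for r
  proof -
    define L where "L y = (1 - r) * (m * r * (norm y)\<^sup>2 - b / r) + ((1 - r\<^sup>2) * (norm y)\<^sup>2 - 2 * (1 - r) * (y \<bullet> p)) / (2 * lam)" for y
    have pw: "e y * (1 + L y / \<delta>) \<le> e (r *\<^sub>R y)" for y
    proof -
      have "U y - U (r *\<^sub>R y) = (f y - f (r *\<^sub>R y)) + ((norm (y - p))\<^sup>2 - (norm (r *\<^sub>R y - p))\<^sup>2) / (2 * lam)"
        by (simp add: U_def diff_divide_distrib)
      also have "\<dots> \<ge> L y"
        unfolding quad_diff L_def using ray_mvt[OF deriv coerc m b r, of y] by simp
      finally have UL: "U y - U (r *\<^sub>R y) \<ge> L y" .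
      have "e (r *\<^sub>R y) = e y * exp ((U y - U (r *\<^sub>R y)) / \<delta>)"
        unfolding eU by (simp add: exp_add[symmetric] diff_divide_distrib)
      moreover have "exp ((U y - U (r *\<^sub>R y)) / \<delta>) \<ge> 1 + L y / \<delta>"
      proof -
        have "1 + L y / \<delta> \<le> exp (L y / \<delta>)" by (rule exp_ge_add_one_self)
        also have "\<dots> \<le> exp ((U y - U (r *\<^sub>R y)) / \<delta>)" using UL d by (simp add: divide_right_mono)
        finally show ?thesis .
      qed
      moreover have "e y \<ge> 0" by (simp add: eU)
      ultimately show ?thesis by (simp add: mult_left_mono)
    qed
    have ier: "integrable lborel (\<lambda>y. e (r *\<^sub>R y))"
      using integrable_scale_euclid[OF ie, of r 0] r by simp
    have Zr: "Z = r ^ DIM('a) * (\<integral>y. e (r *\<^sub>R y) \<partial>lborel)"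
      using integral_scale_euclid[OF ie, of r 0] r by (simp add: Z_def)
    define \<alpha> where "\<alpha> = ((1 - r) * m * r + (1 - r\<^sup>2) / (2 * lam)) / \<delta>"
    define \<beta> where "\<beta> = - ((1 - r) * b / r) / \<delta>"
    define \<gamma> where "\<gamma> = - (2 * (1 - r) / (2 * lam)) / \<delta>"
    have eqL: "e y * (1 + L y / \<delta>) = e y + \<alpha> * ((norm y)\<^sup>2 * e y) + \<beta> * e y + \<gamma> * ((y \<bullet> p) * e y)" for y
      unfolding L_def \<alpha>_def \<beta>_def \<gamma>_def by (rule alg_L) (use r lam d in auto)
    have "(\<integral>y. e y * (1 + L y / \<delta>) \<partial>lborel) = Z + \<alpha> * M + \<beta> * Z + \<gamma> * J"
      unfolding eqL Z_def M_def J_def using ie iN iP by simp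
    moreover have "(\<integral>y. e y * (1 + L y / \<delta>) \<partial>lborel) \<le> (\<integral>y. e (r *\<^sub>R y) \<partial>lborel)"
      by (rule integral_mono[OF _ ier pw]) (unfold eqL, use ie iN iP in simp)
    moreover have "(\<integral>y. e (r *\<^sub>R y) \<partial>lborel) = Z / r ^ DIM('a)" using Zr r by simp
    ultimately have ineq: "\<alpha> * M + \<beta> * Z + \<gamma> * J \<le> Z * (1 / r ^ DIM('a) - 1)"
      by (simp add: algebra_simps)
    have "\<alpha> * M + \<beta> * Z + \<gamma> * J = (1 - r) / \<delta> * \<Phi> r"
      unfolding \<alpha>_def \<beta>_def \<gamma>_def \<Phi>_def using r lam d by (simp add: field_simps power2_eq_square)
    with ineq have "(1 - r) / \<delta> * \<Phi> r \<le> Z * (1 / r ^ DIM('a) - 1)" by simp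
    then show ?thesis using r d by (simp add: field_simps)
  qed
  have lim1: "(\<Phi> \<longlongrightarrow> \<Phi> 1) (at_left 1)"
  proof -
    have "continuous (at 1) \<Phi>" unfolding \<Phi>_def using lam by (intro continuous_intros) auto
    then have "(\<Phi> \<longlongrightarrow> \<Phi> 1) (at 1)" by (simp add: continuous_at)
    then show ?thesis by (rule filterlim_mono) (auto simp: at_le)
  qed
  have lim2: "((\<lambda>r. \<delta> * Z * ((1 / r ^ DIM('a) - 1) / (1 - r))) \<longlongrightarrow> \<delta> * Z * real DIM('a)) (at_left 1)"
    by (intro tendsto_mult_left lim_pow)
  have ev: "eventually (\<lambda>r. \<Phi> r \<le> \<delta> * Z * ((1 / r ^ DIM('a) - 1) / (1 - r))) (at_left (1::real))"
    unfolding eventually_at_left_field using step by (intro exI[of _ 0]) auto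
  have lim: "\<Phi> 1 \<le> \<delta> * Z * real DIM('a)"
    by (rule tendsto_le[OF trivial_limit_at_left_real lim2 lim1 ev])
  have JM: "J \<le> (M + (norm p)\<^sup>2 * Z) / 2"
  proof -
    have "J \<le> (\<integral>y. ((norm y)\<^sup>2 * e y + (norm p)\<^sup>2 * e y) / 2 \<partial>lborel)"
      unfolding J_def
    proof (rule integral_mono[OF iP])
      show "integrable lborel (\<lambda>y. ((norm y)\<^sup>2 * e y + (norm p)\<^sup>2 * e y) / 2)" using iN ie by simp
      show "(y \<bullet> p) * e y \<le> ((norm y)\<^sup>2 * e y + (norm p)\<^sup>2 * e y) / 2" for y
      proof -
        have "(y \<bullet> p) * e y \<le> ((norm y)\<^sup>2 + (norm p)\<^sup>2) / 2 * e y"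
          using inner_half[of y p] eU[of y] by (intro mult_right_mono) auto
        then show ?thesis by (simp add: algebra_simps)
      qed
    qed
    also have "\<dots> = (M + (norm p)\<^sup>2 * Z) / 2" unfolding M_def Z_def using iN ie by simp
    finally show ?thesis .
  qed
  have pR2: "(norm p)\<^sup>2 \<le> R\<^sup>2" using pR by (simp add: power_mono)
  have "(m + 1 / (2 * lam)) * M \<le> (\<delta> * real DIM('a) + b + R\<^sup>2 / (2 * lam)) * Z"
  proof -
    have "\<Phi> 1 = (m + 1 / lam) * M - b * Z - J / lam" unfolding \<Phi>_def by simp
    then have A: "(m + 1 / lam) * M - b * Z - J / lam \<le> \<delta> * real DIM('a) * Z" using lim by (simp add: mult_ac)
    have B: "J / lam \<le> (M + R\<^sup>2 * Z) / 2 / lam"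
    proof -
      have "(norm p)\<^sup>2 * Z \<le> R\<^sup>2 * Z" using pR2 Zpos by (intro mult_right_mono) auto
      then have "J \<le> (M + R\<^sup>2 * Z) / 2" using JM by simp
      then show ?thesis using lam by (intro divide_right_mono) auto
    qed
    have C: "(M + R\<^sup>2 * Z) / 2 / lam = M / (2 * lam) + R\<^sup>2 / (2 * lam) * Z"
      using lam by (simp add: field_simps)
    have D: "(m + 1 / lam) * M = (m + 1 / (2 * lam)) * M + M / (2 * lam)"
      using lam by (simp add: field_simps)
    have E: "(\<delta> * real DIM('a) + b + R\<^sup>2 / (2 * lam)) * Z = \<delta> * real DIM('a) * Z + b * Z + R\<^sup>2 / (2 * lam) * Z"
      by (simp add: algebra_simps)
    show ?thesis using A B C D E by linarith
  qed
  also have "\<dots> \<le> (\<delta> * m * lam) * Z" using cond Zpos by (intro mult_right_mono) auto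
  also have "\<dots> \<le> (lam * \<delta> * (m + 1 / (2 * lam))) * Z"
    using lam d Zpos by (intro mult_right_mono) (auto simp: field_simps)
  finally have X: "(m + 1 / (2 * lam)) * M \<le> (lam * \<delta> * (m + 1 / (2 * lam))) * Z" .
  have Y: "(lam * \<delta> * (m + 1 / (2 * lam))) * Z = (m + 1 / (2 * lam)) * (lam * \<delta> * Z)" by (simp only: mult_ac)
  have "(m + 1 / (2 * lam)) * M \<le> (m + 1 / (2 * lam)) * (lam * \<delta> * Z)" by (rule ord_le_eq_trans[OF X Y])
  moreover have pos: "0 < m + 1 / (2 * lam)" using m lam by (intro add_pos_pos) auto
  ultimately have "M \<le> lam * \<delta> * Z" using mult_le_cancel_left_pos[OF pos] by blast
  moreover have "(\<integral>y. exp (- f y / \<delta>) * ((norm y)\<^sup>2 * ge (lam * \<delta>) p y) \<partial>lborel) = M"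
    unfolding M_def e_def h_def s_def by (simp add: mult.left_commute)
  moreover have "Zf (\<lambda>y. exp (- f y / \<delta>)) (lam * \<delta>) p = Z"
    unfolding Z_def Zf_def e_def h_def s_def ..
  ultimately show ?thesis by simp
qed

context
  fixes h :: "'a::euclidean_space \<Rightarrow> real" and s :: real
  assumes hint: "integrable lborel h" and hpos: "\<And>y. 0 < h y" and s: "s > 0"
begin

lemma iB: "integrable lborel (\<lambda>y. h y * ((((y - p) \<bullet> v) - c)\<^sup>2 * ge s p y))"
proof -
  have i0: "integrable lborel (\<lambda>y. h y * ge s p y)"
    by (rule int_hb[OF hint hpos s _ ge_abs_le1[OF s]]) measurable
  have i1: "integrable lborel (\<lambda>y. h y * ((y - p) \<bullet> v * ge s p y))"
    by (rule int_hb[OF hint hpos s _ ge_b1[OF s]]) measurable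
  have i2: "integrable lborel (\<lambda>y. h y * (((y - p) \<bullet> v)\<^sup>2 * ge s p y))"
    by (rule int_hb[OF hint hpos s _ ge_b2[OF s]]) measurable
  show ?thesis unfolding alg_B using i0 i1 i2 by simp
qed

lemma Bexp: "(\<integral>y. h y * ((((y - p) \<bullet> v) - c)\<^sup>2 * ge s p y) \<partial>lborel)
   = s\<^sup>2 * Z2 h s p v + s * (norm v)\<^sup>2 * Zf h s p - 2 * c * s * Z1 h s p v + c\<^sup>2 * Zf h s p"
proof -
  define A0 where "A0 = Zf h s p"
  define A1 where "A1 = (\<integral>y. h y * ((y - p) \<bullet> v * ge s p y) \<partial>lborel)"
  define A2 where "A2 = (\<integral>y. h y * (((y - p) \<bullet> v)\<^sup>2 * ge s p y) \<partial>lborel)"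
  have i0: "integrable lborel (\<lambda>y. h y * ge s p y)"
    by (rule int_hb[OF hint hpos s _ ge_abs_le1[OF s]]) measurable
  have i1: "integrable lborel (\<lambda>y. h y * ((y - p) \<bullet> v * ge s p y))"
    by (rule int_hb[OF hint hpos s _ ge_b1[OF s]]) measurable
  have i2: "integrable lborel (\<lambda>y. h y * (((y - p) \<bullet> v)\<^sup>2 * ge s p y))"
    by (rule int_hb[OF hint hpos s _ ge_b2[OF s]]) measurable
  have Z1e: "Z1 h s p v = A1 / s" unfolding Z1_def A1_def alg_Z1 by simp
  have Z2e: "Z2 h s p v = A2 / s\<^sup>2 - (norm v)\<^sup>2 / s * A0" unfolding Z2_def A2_def A0_def Zf_def alg_Z2
    using i0 i2 by (simp add: integral_diff)
  have Be: "(\<integral>y. h y * ((((y - p) \<bullet> v) - c)\<^sup>2 * ge s p y) \<partial>lborel) = A2 - 2 * c * A1 + c\<^sup>2 * A0"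
    unfolding alg_B A2_def A1_def A0_def Zf_def
    using i0 i1 i2 by (simp add: integral_diff integral_add)
  show ?thesis unfolding Be Z1e Z2e A0_def[symmetric] using s by (simp add: field_simps power2_eq_square)
qed

end

lemma norm_line_sq: "(norm (x + t *\<^sub>R v))\<^sup>2 = (norm x)\<^sup>2 + 2 * t * (x \<bullet> v) + t\<^sup>2 * (norm v)\<^sup>2"
  for x v :: "'a::real_inner"
  unfolding power2_norm_eq_inner
  by (simp add: inner_add_left inner_add_right inner_commute power2_eq_square algebra_simps)

lemma gauss_line_deriv:
  fixes x v :: "'a::real_inner"
  shows "((\<lambda>t. C * exp (- \<beta> / 2 * (norm (x + t *\<^sub>R v))\<^sup>2)) has_real_derivative
     (- \<beta> * ((x + t *\<^sub>R v) \<bullet> v)) * (C * exp (- \<beta> / 2 * (norm (x + t *\<^sub>R v))\<^sup>2))) (at t)"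
proof -
  have e: "(norm (x + t *\<^sub>R v))\<^sup>2 = (norm x)\<^sup>2 + 2 * t * (x \<bullet> v) + t\<^sup>2 * (norm v)\<^sup>2" for t
    by (rule norm_line_sq)
  have i: "(x + t *\<^sub>R v) \<bullet> v = x \<bullet> v + t * (norm v)\<^sup>2"
    by (simp add: inner_add_left power2_norm_eq_inner)
  have "((\<lambda>t. - \<beta> / 2 * ((norm x)\<^sup>2 + 2 * t * (x \<bullet> v) + t\<^sup>2 * (norm v)\<^sup>2)) has_real_derivative
          - \<beta> * (x \<bullet> v + t * (norm v)\<^sup>2)) (at t)"
    apply (rule derivative_eq_intros refl)+
    apply (simp add: algebra_simps)
    done
  from DERIV_cmult[OF DERIV_exp[THEN DERIV_chain2, OF this], of C]
  show ?thesis unfolding e i by (simp add: mult_ac)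
qed

lemma gauss_line_deriv2:
  fixes x v :: "'a::real_inner"
  shows "((\<lambda>t. (- \<beta> * ((x + t *\<^sub>R v) \<bullet> v)) * (C * exp (- \<beta> / 2 * (norm (x + t *\<^sub>R v))\<^sup>2))) has_real_derivative
     (\<beta>\<^sup>2 * ((x + t *\<^sub>R v) \<bullet> v)\<^sup>2 - \<beta> * (norm v)\<^sup>2) * (C * exp (- \<beta> / 2 * (norm (x + t *\<^sub>R v))\<^sup>2))) (at t)"
proof -
  have i: "(x + t *\<^sub>R v) \<bullet> v = x \<bullet> v + t * (norm v)\<^sup>2" for t
    by (simp add: inner_add_left power2_norm_eq_inner)
  have d1: "((\<lambda>t. - \<beta> * ((x + t *\<^sub>R v) \<bullet> v)) has_real_derivative - \<beta> * (norm v)\<^sup>2) (at t)"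
    unfolding i by (rule derivative_eq_intros refl)+ simp
  show ?thesis
    apply (rule DERIV_cong[OF DERIV_mult[OF d1 gauss_line_deriv]])
    apply (simp add: power2_eq_square algebra_simps)
    done
qed

lemma gauss_complete:
  fixes y p :: "'a::euclidean_space"
  assumes k: "\<kappa> > 0" and d: "\<delta> > 0" and s: "s > 0"
    and a: "a = \<kappa> / \<delta> + 1 / s" and \<beta>: "\<beta> = 1 / s - 1 / (s\<^sup>2 * a)"
  shows "exp (- (\<kappa> / 2 * (norm y)\<^sup>2) / \<delta>) * ge s p y
       = exp (- a / 2 * (norm (y - (1 / (s * a)) *\<^sub>R p))\<^sup>2) * exp (- \<beta> / 2 * (norm p)\<^sup>2)"
proof -
  have a0: "a > 0" using a k d s by (simp add: add_pos_pos)
  have e1: "(norm (y - p))\<^sup>2 = (norm y)\<^sup>2 - 2 * (y \<bullet> p) + (norm p)\<^sup>2"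
    unfolding power2_norm_eq_inner by (simp add: inner_diff_left inner_diff_right inner_commute)
  have e2: "(norm (y - (1 / (s * a)) *\<^sub>R p))\<^sup>2 = (norm y)\<^sup>2 - 2 * (1 / (s * a)) * (y \<bullet> p) + (1 / (s * a))\<^sup>2 * (norm p)\<^sup>2"
    unfolding power2_norm_eq_inner by (simp add: inner_diff_left inner_diff_right inner_commute power2_eq_square)
  have "- (\<kappa> / 2 * (norm y)\<^sup>2) / \<delta> + - (norm (y - p))\<^sup>2 / (2 * s)
      = - a / 2 * (norm (y - (1 / (s * a)) *\<^sub>R p))\<^sup>2 + - \<beta> / 2 * (norm p)\<^sup>2"
  proof -
    have aa: "a - 1 / s = \<kappa> / \<delta>" using a by simp
    have ka: "\<kappa> / 2 * (norm y)\<^sup>2 / \<delta> = (a - 1 / s) / 2 * (norm y)\<^sup>2"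
      unfolding aa by simp
    show ?thesis unfolding e1 e2 minus_divide_left[symmetric] ka \<beta> using s a0
      by (simp add: field_simps power2_eq_square)
  qed
  then show ?thesis unfolding ge_def by (simp add: mult_exp_exp)
qed

lemma part2_key:
  fixes f V :: "'a::euclidean_space \<Rightarrow> real"
  assumes k: "\<kappa> > 0" and lam: "lam > 0" and d: "\<delta> > 0"
    and fV: "\<And>y. f y = \<kappa> / 2 * (norm y)\<^sup>2 + V y"
    and Vi: "\<And>y. Vi \<le> V y" and Vs: "\<And>y. V y \<le> Vs"
    and cond: "lam \<ge> (exp ((Vs - Vi) / \<delta>) - 1) / \<kappa>"
    and hint: "integrable lborel (\<lambda>y. exp (- f y / \<delta>))"
    and Vm: "V \<in> borel_measurable borel"
  shows "Z2 (\<lambda>y. exp (- f y / \<delta>)) (lam * \<delta>) p v * Zf (\<lambda>y. exp (- f y / \<delta>)) (lam * \<delta>) p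
       \<le> Z1 (\<lambda>y. exp (- f y / \<delta>)) (lam * \<delta>) p v * Z1 (\<lambda>y. exp (- f y / \<delta>)) (lam * \<delta>) p v"
proof -
  define h where "h = (\<lambda>y. exp (- f y / \<delta>))"
  define s where "s = lam * \<delta>"
  have s: "s > 0" using lam d by (simp add: s_def)
  have hint': "integrable lborel h" using hint by (simp add: h_def)
  have hpos: "\<And>y. 0 < h y" by (simp add: h_def)
  have [measurable]: "h \<in> borel_measurable borel" using hmeas'[OF hint' hpos s] .
  define h0 where "h0 y = exp (- (\<kappa> / 2 * (norm y)\<^sup>2) / \<delta>)" for y :: 'a
  have h0pos: "\<And>y. 0 < h0 y" by (simp add: h0_def)
  have hh0: "h y = h0 y * exp (- V y / \<delta>)" for y
  proof -
    have "- f y / \<delta> = - (\<kappa> / 2 * (norm y)\<^sup>2) / \<delta> + - V y / \<delta>"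
      unfolding fV using d by (simp add: field_simps)
    then show ?thesis unfolding h_def h0_def by (simp add: mult_exp_exp)
  qed
  have h0le: "h0 y \<le> exp (Vs / \<delta>) * h y" for y
  proof -
    have "exp (- Vs / \<delta>) \<le> exp (- V y / \<delta>)" using Vs[of y] d by (simp add: divide_right_mono)
    then have "h0 y * exp (- Vs / \<delta>) \<le> h y" unfolding hh0 using h0pos[of y] by (simp add: mult_left_mono)
    then have "exp (Vs / \<delta>) * (h0 y * exp (- Vs / \<delta>)) \<le> exp (Vs / \<delta>) * h y" by simp
    moreover have "exp (Vs / \<delta>) * (h0 y * exp (- Vs / \<delta>)) = h0 y"
    proof -
      have E: "exp (Vs / \<delta>) * exp (- Vs / \<delta>) = 1" by (simp add: mult_exp_exp)
      show ?thesis by (metis E mult.commute mult.left_commute mult_1_right)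
    qed
    ultimately show ?thesis by (simp only:)
  qed
  have [measurable]: "h0 \<in> borel_measurable borel" unfolding h0_def by measurable
  have h0int: "integrable lborel h0"
  proof (rule Bochner_Integration.integrable_bound[where f = "\<lambda>y. exp (Vs / \<delta>) * h y"])
    show "integrable lborel (\<lambda>y. exp (Vs / \<delta>) * h y)" using hint' by simp
    show "AE y in lborel. norm (h0 y) \<le> norm (exp (Vs / \<delta>) * h y)"
      using h0le h0pos hpos by (intro AE_I2) (simp add: less_imp_le abs_of_pos)
  qed measurable
  define a where "a = \<kappa> / \<delta> + 1 / s"
  define \<beta> where "\<beta> = 1 / s - 1 / (s\<^sup>2 * a)"
  have a0: "a > 0" using k d s by (simp add: a_def add_pos_pos)
  define C0 where "C0 = (\<integral>y. exp (- a / 2 * (norm (y::'a))\<^sup>2) \<partial>lborel)"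
  have Zgauss: "Zf h0 s q = C0 * exp (- \<beta> / 2 * (norm q)\<^sup>2)" for q
  proof -
    define \<mu> where "\<mu> = (1 / (s * a)) *\<^sub>R q"
    define G where "G y = exp (- a / 2 * (norm (y - \<mu>))\<^sup>2)" for y
    have eq: "h0 y * ge s q y = G y * exp (- \<beta> / 2 * (norm q)\<^sup>2)" for y
      unfolding h0_def G_def \<mu>_def by (rule gauss_complete[OF k d s a_def \<beta>_def])
    have i0: "integrable lborel (\<lambda>y. h0 y * ge s q y)"
      by (rule int_hb[OF h0int h0pos s _ ge_abs_le1[OF s]]) measurable
    have iG: "integrable lborel G"
    proof -
      have X: "integrable lborel (\<lambda>y. (h0 y * ge s q y) * exp (\<beta> / 2 * (norm q)\<^sup>2))" using i0 by simp
      have Y: "(\<lambda>y. (h0 y * ge s q y) * exp (\<beta> / 2 * (norm q)\<^sup>2)) = G"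
        by (rule ext) (simp add: eq mult_exp_exp)
      show ?thesis using X unfolding Y .
    qed
    have "(\<integral>y. G y \<partial>lborel) = \<bar>1\<bar> ^ DIM('a) * (\<integral>y. G (\<mu> + 1 *\<^sub>R y) \<partial>lborel)"
      by (rule integral_scale_euclid[OF iG]) simp
    also have "\<dots> = C0" unfolding C0_def G_def by simp
    finally have "(\<integral>y. G y \<partial>lborel) = C0" .
    then show ?thesis unfolding Zf_def eq by simp
  qed
  have Z1g: "Z1 h0 s q v = - \<beta> * (q \<bullet> v) * (C0 * exp (- \<beta> / 2 * (norm q)\<^sup>2))" for q
  proof -
    have D1: "((\<lambda>t. Zf h0 s (q + t *\<^sub>R v)) has_real_derivative Z1 h0 s (q + 0 *\<^sub>R v) v) (at 0)"
      by (rule Zf_deriv[OF h0int _ s]) (use h0pos in \<open>simp add: less_imp_le\<close>)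
    have D2: "((\<lambda>t. Zf h0 s (q + t *\<^sub>R v)) has_real_derivative
        (- \<beta> * ((q + 0 *\<^sub>R v) \<bullet> v)) * (C0 * exp (- \<beta> / 2 * (norm (q + 0 *\<^sub>R v))\<^sup>2))) (at 0)"
      unfolding Zgauss by (rule gauss_line_deriv)
    from DERIV_unique[OF D1 D2] show ?thesis by simp
  qed
  have Z2g: "Z2 h0 s p v = (\<beta>\<^sup>2 * (p \<bullet> v)\<^sup>2 - \<beta> * (norm v)\<^sup>2) * (C0 * exp (- \<beta> / 2 * (norm p)\<^sup>2))"
  proof -
    have D1: "((\<lambda>t. Z1 h0 s (p + t *\<^sub>R v) v) has_real_derivative Z2 h0 s (p + 0 *\<^sub>R v) v) (at 0)"
      by (rule Z1_deriv[OF h0int _ s]) (use h0pos in \<open>simp add: less_imp_le\<close>)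
    have D2: "((\<lambda>t. Z1 h0 s (p + t *\<^sub>R v) v) has_real_derivative
        (\<beta>\<^sup>2 * ((p + 0 *\<^sub>R v) \<bullet> v)\<^sup>2 - \<beta> * (norm v)\<^sup>2) * (C0 * exp (- \<beta> / 2 * (norm (p + 0 *\<^sub>R v))\<^sup>2))) (at 0)"
      unfolding Z1g by (rule gauss_line_deriv2)
    from DERIV_unique[OF D1 D2] show ?thesis by simp
  qed
  define Z0 where "Z0 = Zf h0 s p"
  have Z0pos: "Z0 > 0" unfolding Z0_def by (rule Zf_pos[OF h0int h0pos s])
  have Z0e: "C0 * exp (- \<beta> / 2 * (norm p)\<^sup>2) = Z0" unfolding Z0_def Zgauss ..
  define c where "c = - s * \<beta> * (p \<bullet> v)"
  have B0: "(\<integral>y. h0 y * ((((y - p) \<bullet> v) - c)\<^sup>2 * ge s p y) \<partial>lborel) = Z0 * (norm v)\<^sup>2 / a"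
  proof -
    have "(\<integral>y. h0 y * ((((y - p) \<bullet> v) - c)\<^sup>2 * ge s p y) \<partial>lborel)
      = s\<^sup>2 * Z2 h0 s p v + s * (norm v)\<^sup>2 * Z0 - 2 * c * s * Z1 h0 s p v + c\<^sup>2 * Z0"
      unfolding Z0_def by (rule Bexp[OF h0int h0pos s])
    also have "\<dots> = Z0 * s * (norm v)\<^sup>2 * (1 - s * \<beta>)"
      unfolding Z2g Z1g Z0e c_def by (simp add: power2_eq_square algebra_simps)
    also have "1 - s * \<beta> = 1 / (s * a)" unfolding \<beta>_def using s a0 by (simp add: field_simps power2_eq_square)
    finally show ?thesis using s by simp
  qed
  have Bh: "(\<integral>y. h y * ((((y - p) \<bullet> v) - c)\<^sup>2 * ge s p y) \<partial>lborel)
      \<le> (\<integral>y. exp (- Vi / \<delta>) * (h0 y * ((((y - p) \<bullet> v) - c)\<^sup>2 * ge s p y)) \<partial>lborel)"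
  proof (rule integral_mono)
    show "integrable lborel (\<lambda>y. h y * ((((y - p) \<bullet> v) - c)\<^sup>2 * ge s p y))" by (rule iB[OF hint' hpos s])
    show "integrable lborel (\<lambda>y. exp (- Vi / \<delta>) * (h0 y * ((((y - p) \<bullet> v) - c)\<^sup>2 * ge s p y)))"
      using iB[OF h0int h0pos s] by simp
    show "h y * ((((y - p) \<bullet> v) - c)\<^sup>2 * ge s p y) \<le> exp (- Vi / \<delta>) * (h0 y * ((((y - p) \<bullet> v) - c)\<^sup>2 * ge s p y))" for y
    proof -
      have "exp (- V y / \<delta>) \<le> exp (- Vi / \<delta>)" using Vi[of y] d by (simp add: divide_right_mono)
      then have "h y \<le> exp (- Vi / \<delta>) * h0 y" unfolding hh0 using h0pos[of y] by (simp add: mult_left_mono mult.commute)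
      then show ?thesis using ge_pos[of s p y]
        by (simp add: mult_right_mono mult.assoc[symmetric])
    qed
  qed
  have Zh: "exp (- Vs / \<delta>) * Z0 \<le> Zf h s p"
  proof -
    have "exp (- Vs / \<delta>) * Z0 = (\<integral>y. exp (- Vs / \<delta>) * (h0 y * ge s p y) \<partial>lborel)"
      unfolding Z0_def Zf_def by simp
    also have "\<dots> \<le> Zf h s p" unfolding Zf_def
    proof (rule integral_mono)
      have "integrable lborel (\<lambda>y. h0 y * ge s p y)"
        by (rule int_hb[OF h0int h0pos s _ ge_abs_le1[OF s]]) measurable
      then show "integrable lborel (\<lambda>y. exp (- Vs / \<delta>) * (h0 y * ge s p y))" by simp
      show "integrable lborel (\<lambda>y. h y * ge s p y)"
        by (rule int_hb[OF hint' hpos s _ ge_abs_le1[OF s]]) measurable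
      show "exp (- Vs / \<delta>) * (h0 y * ge s p y) \<le> h y * ge s p y" for y
      proof -
        have "exp (- Vs / \<delta>) \<le> exp (- V y / \<delta>)" using Vs[of y] d by (simp add: divide_right_mono)
        then have "exp (- Vs / \<delta>) * h0 y \<le> h y" unfolding hh0 using h0pos[of y] by (simp add: mult_left_mono mult.commute)
        then show ?thesis using ge_pos[of s p y] by (simp add: mult_right_mono mult.assoc[symmetric])
      qed
    qed (measurable)
    finally show ?thesis .
  qed
  have osc: "exp ((Vs - Vi) / \<delta>) \<le> s * a"
  proof -
    have "exp ((Vs - Vi) / \<delta>) - 1 \<le> lam * \<kappa>" using cond k by (simp add: field_simps)
    moreover have "s * a = lam * \<kappa> + 1" unfolding s_def a_def using lam d by (simp add: field_simps)
    ultimately show ?thesis by simp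
  qed
  have "(\<integral>y. h y * ((((y - p) \<bullet> v) - c)\<^sup>2 * ge s p y) \<partial>lborel) \<le> exp (- Vi / \<delta>) * (Z0 * (norm v)\<^sup>2 / a)"
    using Bh B0 by simp
  also have "exp (- Vi / \<delta>) = exp ((Vs - Vi) / \<delta>) * exp (- Vs / \<delta>)"
    by (simp add: mult_exp_exp diff_divide_distrib)
  also have "exp ((Vs - Vi) / \<delta>) * exp (- Vs / \<delta>) * (Z0 * (norm v)\<^sup>2 / a)
      \<le> (s * a) * exp (- Vs / \<delta>) * (Z0 * (norm v)\<^sup>2 / a)"
    using osc Z0pos a0 by (intro mult_right_mono) auto
  also have "\<dots> = s * (norm v)\<^sup>2 * (exp (- Vs / \<delta>) * Z0)" using a0 by (simp add: field_simps)
  also have "\<dots> \<le> s * (norm v)\<^sup>2 * Zf h s p" using Zh s by (intro mult_left_mono) auto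
  finally have "(\<integral>y. h y * ((((y - p) \<bullet> v) - c)\<^sup>2 * ge s p y) \<partial>lborel) \<le> s * (norm v)\<^sup>2 * Zf h s p" .
  from var_bound[OF hint' hpos s this] show ?thesis unfolding h_def s_def .
qed

lemma cond_sqrt:
  fixes B \<delta> m lam R :: real
  assumes d: "\<delta> > 0" and m: "m > 0" and lam: "lam > 0" and B: "B \<ge> 0"
    and c: "lam \<ge> (B + sqrt (B\<^sup>2 + 2 * \<delta> * m * R\<^sup>2)) / (2 * \<delta> * m)"
  shows "\<delta> * m * lam \<ge> B + R\<^sup>2 / (2 * lam)"
proof -
  define S where "S = sqrt (B\<^sup>2 + 2 * \<delta> * m * R\<^sup>2)"
  have dm: "2 * \<delta> * m > 0" using d m by simp
  have S0: "S \<ge> 0" unfolding S_def by (intro real_sqrt_ge_zero) (use d m in \<open>auto intro: add_nonneg_nonneg\<close>)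
  have SS: "S\<^sup>2 = B\<^sup>2 + 2 * \<delta> * m * R\<^sup>2" unfolding S_def
    by (intro real_sqrt_pow2) (use d m in \<open>auto intro: add_nonneg_nonneg\<close>)
  have "B + S \<le> lam * (2 * \<delta> * m)" using c dm unfolding S_def[symmetric] by (simp add: pos_divide_le_eq)
  then have X: "S \<le> 2 * \<delta> * m * lam - B" by (simp add: algebra_simps)
  then have "S\<^sup>2 \<le> (2 * \<delta> * m * lam - B)\<^sup>2" using S0 by (intro power_mono) auto
  then have "B\<^sup>2 + 2 * \<delta> * m * R\<^sup>2 \<le> (2 * \<delta> * m * lam - B)\<^sup>2" unfolding SS .
  then have "2 * \<delta> * m * R\<^sup>2 \<le> (2 * \<delta> * m) * (2 * \<delta> * m * lam * lam - 2 * B * lam)"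
    by (simp add: power2_eq_square algebra_simps)
  then have "R\<^sup>2 \<le> 2 * \<delta> * m * lam * lam - 2 * B * lam" using dm by (simp add: mult_le_cancel_left_pos)
  then have "R\<^sup>2 / (2 * lam) \<le> (2 * \<delta> * m * lam * lam - 2 * B * lam) / (2 * lam)" using lam
    by (intro divide_right_mono) auto
  also have "\<dots> = \<delta> * m * lam - B" using lam by (simp add: field_simps)
  finally show ?thesis by simp
qed

theorem theorem4:
  fixes f :: "'a::euclidean_space \<Rightarrow> real" and lam \<delta> :: real
  assumes lam_pos: "lam > 0" and delta_pos: "\<delta> > 0"
    and A1_cont: "continuous_on UNIV f"
    and A1_min: "\<exists>x0. \<forall>y. f x0 \<le> f y"
    and A2: "(\<integral>\<^sup>+ y. ennreal (exp (- f y / \<delta>)) \<partial>lborel) < \<infinity>"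
  shows "(\<forall>g m b R.
            (\<forall>y. (f has_derivative (\<lambda>h. g y \<bullet> h)) (at y)) \<and> continuous_on UNIV g \<and>
            m > 0 \<and> b \<ge> 0 \<and> (\<forall>y. g y \<bullet> y \<ge> m * (norm y)\<^sup>2 - b) \<and> R > 0 \<and>
            lam \<ge> (\<delta> * real DIM('a) + b + sqrt ((\<delta> * real DIM('a) + b)\<^sup>2 + 2 * \<delta> * m * R\<^sup>2))
                    / (2 * \<delta> * m)
          \<longrightarrow> convex_on (ball 0 R) (soft_moreau f lam \<delta>))
       \<and> (\<forall>\<kappa> V.
            \<kappa> > 0 \<and> (\<forall>y. f y = \<kappa> / 2 * (norm y)\<^sup>2 + V y) \<and> bounded (range V) \<and>
            lam \<ge> (exp ((Sup (range V) - Inf (range V)) / \<delta>) - 1) / \<kappa>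
          \<longrightarrow> convex_on UNIV (soft_moreau f lam \<delta>))"
proof -
  define h where "h = (\<lambda>y. exp (- f y / \<delta>))"
  define s where "s = lam * \<delta>"
  have s: "s > 0" using lam_pos delta_pos by (simp add: s_def)
  have fm[measurable]: "f \<in> borel_measurable borel" by (rule borel_measurable_continuous_onI[OF A1_cont])
  have hm[measurable]: "h \<in> borel_measurable borel" unfolding h_def by measurable
  have hint: "integrable lborel h"
    by (rule integrableI_bounded) (use A2 in \<open>simp_all add: h_def\<close>)
  have hint': "integrable lborel (\<lambda>y. exp (- f y / \<delta>))" using hint by (simp add: h_def)
  have hpos: "\<And>y. 0 < h y" by (simp add: h_def)
  define K where "K = (2 * pi * s) powr (- real DIM('a) / 2)"
  have K: "K > 0" unfolding K_def using s by simp
  have SM: "soft_moreau f lam \<delta> = (\<lambda>x. - \<delta> * ln K + - \<delta> * ln (Zf h s x))"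
  proof (rule ext)
    fix x
    have "(\<integral>y. gauss_pdf (lam * \<delta>) x y * exp (- f y / \<delta>) \<partial>lborel) = (\<integral>y. K * (h y * ge s x y) \<partial>lborel)"
      unfolding gauss_pdf_def K_def h_def ge_def s_def by (simp add: mult_ac)
    also have "\<dots> = K * Zf h s x" unfolding Zf_def by simp
    finally have "soft_moreau f lam \<delta> x = - \<delta> * ln (K * Zf h s x)" unfolding soft_moreau_def by (simp only:)
    also have "\<dots> = - \<delta> * ln K + - \<delta> * ln (Zf h s x)"
      using K Zf_pos[OF hint hpos s, of x] by (simp add: ln_mult algebra_simps)
    finally show "soft_moreau f lam \<delta> x = - \<delta> * ln K + - \<delta> * ln (Zf h s x)" .
  qed
  have conv: "convex_on S (soft_moreau f lam \<delta>)"
    if S: "convex S" and key: "\<And>p v. p \<in> S \<Longrightarrow> Z2 h s p v * Zf h s p \<le> Z1 h s p v * Z1 h s p v" for S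
  proof -
    have "convex_on S (\<lambda>x. - \<delta> * ln K + - \<delta> * ln (Zf h s x))"
      by (intro convex_on_add convex_Zf[OF hint hpos s delta_pos S key]) (simp_all add: convex_on_const S)
    then show ?thesis unfolding SM .
  qed
  show ?thesis
  proof (intro conjI allI impI)
    fix g :: "'a \<Rightarrow> 'a" and m b R :: real
    assume H: "(\<forall>y. (f has_derivative (\<lambda>h. g y \<bullet> h)) (at y)) \<and> continuous_on UNIV g \<and>
            m > 0 \<and> b \<ge> 0 \<and> (\<forall>y. g y \<bullet> y \<ge> m * (norm y)\<^sup>2 - b) \<and> R > 0 \<and>
            lam \<ge> (\<delta> * real DIM('a) + b + sqrt ((\<delta> * real DIM('a) + b)\<^sup>2 + 2 * \<delta> * m * R\<^sup>2))
                    / (2 * \<delta> * m)"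
    then have deriv: "\<And>y. (f has_derivative (\<lambda>h. g y \<bullet> h)) (at y)" and m: "m > 0" and b: "b \<ge> 0"
      and coerc: "\<And>y. g y \<bullet> y \<ge> m * (norm y)\<^sup>2 - b" and R: "R > 0"
      and c: "lam \<ge> (\<delta> * real DIM('a) + b + sqrt ((\<delta> * real DIM('a) + b)\<^sup>2 + 2 * \<delta> * m * R\<^sup>2)) / (2 * \<delta> * m)"
      by auto
    have cond: "\<delta> * m * lam \<ge> \<delta> * real DIM('a) + b + R\<^sup>2 / (2 * lam)"
      by (rule cond_sqrt[OF delta_pos m lam_pos _ c]) (use delta_pos b in simp)
    show "convex_on (ball 0 R) (soft_moreau f lam \<delta>)"
    proof (rule conv[OF convex_ball])
      fix p v assume p: "p \<in> ball (0::'a) R"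
      then have pR: "norm p \<le> R" by simp
      have M: "(\<integral>y. h y * ((norm y)\<^sup>2 * ge s p y) \<partial>lborel) \<le> s * Zf h s p"
        using part1_M[OF lam_pos delta_pos deriv coerc m b hint' pR cond] unfolding h_def s_def .
      have iN: "integrable lborel (\<lambda>y. h y * ((norm y)\<^sup>2 * ge s p y))"
        by (rule int_hb[OF hint hpos s _ ge_sq_bound[OF s]]) measurable
      have "(\<integral>y. h y * ((((y - p) \<bullet> v) - - (p \<bullet> v))\<^sup>2 * ge s p y) \<partial>lborel)
          \<le> (\<integral>y. (norm v)\<^sup>2 * (h y * ((norm y)\<^sup>2 * ge s p y)) \<partial>lborel)"
      proof (rule integral_mono)
        show "integrable lborel (\<lambda>y. h y * ((((y - p) \<bullet> v) - - (p \<bullet> v))\<^sup>2 * ge s p y))"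
          by (rule iB[OF hint hpos s])
        show "integrable lborel (\<lambda>y. (norm v)\<^sup>2 * (h y * ((norm y)\<^sup>2 * ge s p y)))" using iN by simp
        show "h y * ((((y - p) \<bullet> v) - - (p \<bullet> v))\<^sup>2 * ge s p y) \<le> (norm v)\<^sup>2 * (h y * ((norm y)\<^sup>2 * ge s p y))" for y
        proof -
          have e: "((y - p) \<bullet> v) - - (p \<bullet> v) = y \<bullet> v" by (simp add: inner_diff_left)
          have "\<bar>y \<bullet> v\<bar> \<le> norm y * norm v" by (rule Cauchy_Schwarz_ineq2)
          then have "(y \<bullet> v)\<^sup>2 \<le> (norm y * norm v)\<^sup>2" by (metis abs_ge_zero power2_abs power_mono)
          then have "(y \<bullet> v)\<^sup>2 \<le> (norm v)\<^sup>2 * (norm y)\<^sup>2" by (simp add: power_mult_distrib mult.commute)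
          then have "h y * ge s p y * (y \<bullet> v)\<^sup>2 \<le> h y * ge s p y * ((norm v)\<^sup>2 * (norm y)\<^sup>2)"
            using hpos[of y] ge_pos[of s p y] by (intro mult_left_mono) auto
          then show ?thesis unfolding e by (simp add: mult_ac)
        qed
      qed
      also have "\<dots> = (norm v)\<^sup>2 * (\<integral>y. h y * ((norm y)\<^sup>2 * ge s p y) \<partial>lborel)" by simp
      also have "\<dots> \<le> (norm v)\<^sup>2 * (s * Zf h s p)" using M by (intro mult_left_mono) auto
      also have "\<dots> = s * (norm v)\<^sup>2 * Zf h s p" by simp
      finally show "Z2 h s p v * Zf h s p \<le> Z1 h s p v * Z1 h s p v"
        by (rule var_bound[OF hint hpos s])
    qed
  next
    fix \<kappa> :: real and V :: "'a \<Rightarrow> real"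
    assume H: "\<kappa> > 0 \<and> (\<forall>y. f y = \<kappa> / 2 * (norm y)\<^sup>2 + V y) \<and> bounded (range V) \<and>
            lam \<ge> (exp ((Sup (range V) - Inf (range V)) / \<delta>) - 1) / \<kappa>"
    then have k: "\<kappa> > 0" and fV: "\<And>y. f y = \<kappa> / 2 * (norm y)\<^sup>2 + V y" and bV: "bounded (range V)"
      and c: "lam \<ge> (exp ((Sup (range V) - Inf (range V)) / \<delta>) - 1) / \<kappa>" by auto
    have Vi: "Inf (range V) \<le> V y" for y using bounded_imp_bdd_below[OF bV] by (simp add: cInf_lower)
    have Vs: "V y \<le> Sup (range V)" for y using bounded_imp_bdd_above[OF bV] by (simp add: cSup_upper)
    have VV: "V = (\<lambda>y. f y - \<kappa> / 2 * (norm y)\<^sup>2)" using fV by (simp add: fun_eq_iff)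
    have Vm: "V \<in> borel_measurable borel" unfolding VV by measurable
    show "convex_on UNIV (soft_moreau f lam \<delta>)"
    proof (rule conv[OF convex_UNIV])
      fix p v :: 'a
      show "Z2 h s p v * Zf h s p \<le> Z1 h s p v * Z1 h s p v"
        using part2_key[OF k lam_pos delta_pos fV Vi Vs c hint' Vm] unfolding h_def s_def .
    qed
  qed
qed

end
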